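(* Let $h\ge 2$ be an integer and $\lambda_G,\lambda_L,\gamma>0$. Let $S=\{(a,b): a\ge 1,\ b\ge 1,\ a+b\le h\}\cup\{(0,1)^\ast\}$ and let $\mathbf{P}=(p_{s,t})_{s,t\in S}$, $\Phi=(\phi_{s,t})_{s,t\in S}$ be the matrices whose only non-zero entries are as follows: for $(a,b)\in S$ with $a\ge 1$, $p_{(a,b),(a-1,b+1)}=\frac{a\lambda_L}{a\lambda_L+\gamma}$ and $\phi_{(a,b),(a-1,b+1)}=\frac{a\lambda_L}{b(a\lambda_L+\gamma)}$ if $a>1$; $p_{(1,b),(0,1)^\ast}=\frac{\lambda_L}{\lambda_L+\gamma}$ and $\phi_{(1,b),(0,1)^\ast}=\frac{\lambda_L}{b(\lambda_L+\gamma)}$; $p_{(a,b),(a,b-1)}=\frac{(b-1)\gamma}{b(a\lambda_L+\gamma)}$ if $b\ge 2$; $\phi_{(a,b),(h-1,1)}=\frac{\lambda_G}{b(a\lambda_L+\gamma)}$; and $\phi_{(0,1)^\ast,(h-1,1)}=\lambda_G/\gamma$ (the row of $\mathbf{P}$ indexed by $(0,1)^\ast$ is zero). Let $\mathbf{M}=(\mathbf{I}-\mathbf{P})^{-1}\Phi$ and $\mu_G=\lambda_G/\gamma$. For $i=0,\ldots,h-1$ let $\mu_i$ be the mean number of infectives in generation $i$ of the single-household epidemic described in the context, and let $\mathbf{A}$ be the $h\times h$ matrix with first column $(\mu_G\mu_0,\mu_G\mu_1,\ldots,\mu_G\mu_{h-1})^\top$, entries $A_{i,i+1}=1$ for $i=1,\ldots,h-1$,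 and all other entries $0$. Then the largest (Perron–Frobenius) eigenvalue of $\mathbf{M}$ equals the largest eigenvalue of $\mathbf{A}$; that is, the basic reproduction number $R_0$ defined as the maximal eigenvalue of $\mathbf{M}$ coincides with the generational basic reproduction number $R_0^g$ (the maximal eigenvalue of $\mathbf{A}$).
   Context: Markovian SIR household epidemic: the population is partitioned into households of size $h$. Each infective remains infectious for an exponentially distributed time with rate $\gamma$ (independently); whilst infectious it makes global contacts at rate $\lambda_G$ with individuals chosen uniformly from the (large) population, each such contact in the early stages creating a new infectious household in state $(h-1,1)$, and makes contacts with each other given member of its household at rate $\lambda_L$; contacted susceptibles immediately become infectious. A state $(a,b)$ denotes a household with $a$ susceptibles and $b$ infectives; states with no susceptibles are amalgamated into $(0,1)^\ast$. $\mathbf{M}$ is the mean reproduction matrix: $m_{s,t}$ is the mean number of type-$t$ infectives generated by an individual infected as a member of a type-$s$ infectious unit. Single-household epidemic and generations: in a household with one initial infective and $h-1$ susceptibles evolving with local contacts only, the initial infective is in generation $0$, and an individual infected by a generation-$(i-1)$ infective is in generation $i$; $\mu_i$ is the expected number of generation-$i$ infectives. *)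

theory Defs
  imports "Jordan_Normal_Form.Matrix" "Jordan_Normal_Form.Char_Poly" "Jordan_Normal_Form.Gauss_Jordan_Elimination"
begin

text \<open>Markovian SIR epidemic in one household, local contacts only.
  State: s = number of susceptibles, c = list whose k-th entry is the number of
  currently infectious individuals of generation k.  Since all infectious periods
  are exponential (rate gamma) and each infective contacts each other household member
  at rate lambdaL, the embedded jump chain has the following transitions:
  a generation-k infective infects a susceptible at total rate lambdaL * s * c_k,
  creating a generation-(k+1) infective; a generation-k infective recovers at
  total rate gamma * c_k.
  gen_future lL g s c i = expected number of generation-i infections that occur
  in the future, starting from state (s,c).\<close>

function gen_future :: "real \<Rightarrow> real \<Rightarrow> nat \<Rightarrow> nat list \<Rightarrow> nat \<Rightarrow> real" where
  "gen_future lL g s c i =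
     (if sum_list c = 0 then 0 else
      (let R = (real s * lL + g) * real (sum_list c) in
        (\<Sum>k<length c.
            (if s > 0 then (lL * real s * real (c ! k) / R) *
               ((if i = Suc k then 1 else 0) + gen_future lL g (s - 1) (c[Suc k := Suc (c ! Suc k)]) i)
             else 0)
          + (if c ! k > 0 then (g * real (c ! k) / R) *
               gen_future lL g s (c[k := c ! k - 1]) i
             else 0))))"
  by pat_completeness auto
termination
proof (relation "measure (\<lambda>(lL, g, s, c, i). 2 * s + sum_list c)", goal_cases)
  case 1 then show ?case by auto
next
  case (2 lL g s c i R k)
  have "sum_list (c[Suc k := Suc (c ! Suc k)]) \<le> sum_list c + 1"
  proof (cases "Suc k < length c")
    case True then show ?thesis by (simp add: sum_list_update)
  next
    case False then show ?thesis by (simp add: list_update_beyond)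
  qed
  with 2 show ?case by auto
next
  case (3 lL g s c i R k)
  have "k < length c" using 3 by simp
  moreover have "c ! k \<le> sum_list c" using \<open>k < length c\<close> by (simp add: elem_le_sum_list)
  ultimately have "sum_list (c[k := c ! k - 1]) < sum_list c" using 3
    by (auto simp add: sum_list_update)
  then show ?case by auto
qed

definition gen_mean :: "nat \<Rightarrow> real \<Rightarrow> real \<Rightarrow> nat \<Rightarrow> real" where
  "gen_mean h lL g i =
     (if i = 0 then 1 else 0) + gen_future lL g (h - 1) (1 # replicate (h - 1) 0) i"

text \<open>Types (a,b) with a \<ge> 1, b \<ge> 1, a+b \<le> h; the amalgamated type (0,1)* is
  represented by the pair (0,1).\<close>
definition hh_states :: "nat \<Rightarrow> (nat \<times> nat) list" where
  "hh_states h = concat (map (\<lambda>a. map (\<lambda>b. (a, b)) [1..<h + 1 - a]) [1..<h]) @ [(0, 1)]"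

definition p_entry :: "real \<Rightarrow> real \<Rightarrow> nat \<times> nat \<Rightarrow> nat \<times> nat \<Rightarrow> real" where
  "p_entry lL g st st' = (case st of (a, b) \<Rightarrow>
     if a \<ge> 1 then
       (if a > 1 \<and> st' = (a - 1, b + 1) then real a * lL / (real a * lL + g) else 0)
     + (if a = 1 \<and> st' = (0, 1) then lL / (lL + g) else 0)
     + (if b \<ge> 2 \<and> st' = (a, b - 1) then (real b - 1) * g / (real b * (real a * lL + g)) else 0)
     else 0)"

definition phi_entry :: "nat \<Rightarrow> real \<Rightarrow> real \<Rightarrow> real \<Rightarrow> nat \<times> nat \<Rightarrow> nat \<times> nat \<Rightarrow> real" where
  "phi_entry h lG lL g st st' = (case st of (a, b) \<Rightarrow>
     if a \<ge> 1 then
       (if a > 1 \<and> st' = (a - 1, b + 1) then real a * lL / (real b * (real a * lL + g)) else 0)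
     + (if a = 1 \<and> st' = (0, 1) then lL / (real b * (lL + g)) else 0)
     + (if st' = (h - 1, 1) then lG / (real b * (real a * lL + g)) else 0)
     else (if st' = (h - 1, 1) then lG / g else 0))"

definition P_mat :: "nat \<Rightarrow> real \<Rightarrow> real \<Rightarrow> real mat" where
  "P_mat h lL g = (let S = hh_states h in
     mat (length S) (length S) (\<lambda>(i, j). p_entry lL g (S ! i) (S ! j)))"

definition Phi_mat :: "nat \<Rightarrow> real \<Rightarrow> real \<Rightarrow> real \<Rightarrow> real mat" where
  "Phi_mat h lG lL g = (let S = hh_states h in
     mat (length S) (length S) (\<lambda>(i, j). phi_entry h lG lL g (S ! i) (S ! j)))"

definition M_mat :: "nat \<Rightarrow> real \<Rightarrow> real \<Rightarrow> real \<Rightarrow> real mat" where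
  "M_mat h lG lL g = (let n = length (hh_states h) in
     the (mat_inverse (1\<^sub>m n - P_mat h lL g)) * Phi_mat h lG lL g)"

definition A_mat :: "nat \<Rightarrow> real \<Rightarrow> real \<Rightarrow> real \<Rightarrow> real mat" where
  "A_mat h lG lL g = mat h h (\<lambda>(i, j).
     (if j = 0 then (lG / g) * gen_mean h lL g i else 0) + (if j = i + 1 then 1 else 0))"

definition max_eigenvalue :: "real mat \<Rightarrow> real" where
  "max_eigenvalue A = Max {r. eigenvalue A r}"

end

theory Submission
  imports Defs
begin
declare gen_future.simps[simp del]

fun Vf :: "real \<Rightarrow> real \<Rightarrow> real \<Rightarrow> nat \<Rightarrow> nat \<Rightarrow> real" where
  "Vf z lL g 0 n = 1"
| "Vf z lL g (Suc s) 0 = 0"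
| "Vf z lL g (Suc s) (Suc m) = g / (real (Suc m) * (real (Suc s) * lL + g))
     + real (Suc s) * lL / (real (Suc s) * lL + g) * (1 + z / real (Suc m)) * Vf z lL g s (Suc (Suc m))
     + real m * g / (real (Suc m) * (real (Suc s) * lL + g)) * Vf z lL g (Suc s) m"

lemma Vf_rec:
  assumes "s > 0" "n > 0"
  shows "Vf z lL g s n = g / (real n * (real s * lL + g))
     + real s * lL / (real s * lL + g) * (1 + z / real n) * Vf z lL g (s - 1) (n + 1)
     + (real n - 1) * g / (real n * (real s * lL + g)) * Vf z lL g s (n - 1)"
proof -
  obtain s' where s: "s = Suc s'" using assms by (cases s) auto
  obtain m where n: "n = Suc m" using assms by (cases n) auto
  show ?thesis unfolding s n by simp
qed

definition Cw :: "real \<Rightarrow> nat list \<Rightarrow> real" where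
  "Cw z c = (\<Sum>k<length c. real (c ! k) * z ^ k)"

definition GF :: "real \<Rightarrow> real \<Rightarrow> real \<Rightarrow> nat \<Rightarrow> nat list \<Rightarrow> real" where
  "GF z lL g s c = (\<Sum>i<length c. z ^ i * gen_future lL g s c i)"

definition ginv :: "nat \<Rightarrow> nat list \<Rightarrow> bool" where
  "ginv s c = (\<forall>k<length c. c ! k > 0 \<longrightarrow> k + s < length c)"

lemma real_sum_list: "real (sum_list c) = (\<Sum>k<length c. real (c ! k))"
  by (simp add: sum_list_sum_nth atLeast0LessThan)

lemma Cw_upd_inc:
  assumes "j < length c"
  shows "Cw z (c[j := Suc (c ! j)]) = Cw z c + z ^ j"
proof -
  have "Cw z (c[j := Suc (c ! j)]) = (\<Sum>k<length c. real (c ! k) * z ^ k + (if k = j then z ^ j else 0))"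
    unfolding Cw_def by (intro sum.cong) (auto simp: nth_list_update algebra_simps)
  also have "\<dots> = Cw z c + z ^ j" using assms unfolding Cw_def by (simp add: sum.distrib)
  finally show ?thesis .
qed

lemma Cw_upd_dec:
  assumes "j < length c" "c ! j > 0"
  shows "Cw z (c[j := c ! j - 1]) = Cw z c - z ^ j"
proof -
  have "Cw z (c[j := c ! j - 1]) = (\<Sum>k<length c. real (c ! k) * z ^ k - (if k = j then z ^ j else 0))"
    unfolding Cw_def using assms by (intro sum.cong) (auto simp: nth_list_update algebra_simps of_nat_diff)
  also have "\<dots> = Cw z c - z ^ j" using assms unfolding Cw_def by (simp add: sum_subtractf)
  finally show ?thesis .
qed

lemma alg1: fixes x R ck C z V1 V2 g :: real
  shows "(x*ck/R) * (z^Suc k + (C + z^Suc k)*(V1-1)) + (g*ck/R)*((C - z^k)*(V2-1))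
   = ck*(((x/R)*C*(V1-1) + g/R*C*(V2-1)) + ((x/R)*z*V1 - g/R*(V2-1))*z^k)"
  by (simp add: divide_inverse algebra_simps)

lemma alg1b: fixes x R ck C z V1 V2 g :: real
  shows "(g*ck/R)*((C - z^k)*(V2-1))
   = ck*((0 + g/R*C*(V2-1)) + (0 - g/R*(V2-1))*z^k)"
  by (simp add: divide_inverse algebra_simps)

lemma alg2: fixes x y n C z V1 V2 g q :: real
  assumes "n \<noteq> 0" "q \<noteq> 0" "g = q - x" "y = x"
  shows "C + (((x/(q*n))*C*(V1-1) + g/(q*n)*C*(V2-1))*n + ((x/(q*n))*z*V1 - g/(q*n)*(V2-1))*C)
    = C*(g/(n*q) + y/q*(1+z/n)*V1 + (n-1)*g/(n*q)*V2)"
  unfolding assms(3,4) using assms(1,2) by (simp add: field_simps)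

lemma main_GF:
  "lL > 0 \<Longrightarrow> g > 0 \<Longrightarrow> ginv s c \<Longrightarrow>
    Cw z c + GF z lL g s c = Cw z c * Vf z lL g s (sum_list c)"
proof (induction lL g s c "0::nat" rule: gen_future.induct)
  case (1 lL g s c)
  note IH1 = "1.hyps"(1) and IH2 = "1.hyps"(2)
  have lL: "lL > 0" and g: "g > 0" and inv: "ginv s c" using "1.prems" by auto
  define N where "N = length c"
  define n where "n = sum_list c"
  define C where "C = Cw z c"
  show ?case
  proof (cases "n = 0")
    case True
    then have z: "\<And>k. k < N \<Longrightarrow> c ! k = 0" unfolding n_def N_def
      by (metis elem_le_sum_list le_zero_eq)
    have "Cw z c = 0" unfolding Cw_def using z N_def by simp
    moreover have "GF z lL g s c = 0" unfolding GF_def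
      using True n_def by (subst gen_future.simps) simp
    ultimately show ?thesis by simp
  next
    case False
    define R where "R = (real s * lL + g) * real n"
    have Rpos: "R > 0" unfolding R_def using False lL g by (auto intro!: mult_pos_pos add_nonneg_pos)
    define V1 where "V1 = Vf z lL g (s - 1) (n + 1)"
    define V2 where "V2 = Vf z lL g s (n - 1)"
    define \<alpha> where "\<alpha> = (if 0 < s then lL * real s / R * C * (V1 - 1) else 0) + g / R * C * (V2 - 1)"
    define \<beta> where "\<beta> = (if 0 < s then lL * real s / R * z * V1 else 0) - g / R * (V2 - 1)"
    define T where "T = (\<lambda>i k. (if 0 < s
             then lL * real s * real (c ! k) / R *
                  ((if i = Suc k then 1 else 0) +
                   gen_future lL g (s - 1)
                    (c[Suc k := Suc (c ! Suc k)]) i)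
             else 0) +
            (if 0 < c ! k
             then g * real (c ! k) / R *
                  gen_future lL g s (c[k := c ! k - 1]) i
             else 0))"
    have gf: "gen_future lL g s c i = (\<Sum>k<N. T i k)" for i
    proof -
      have nz: "sum_list c \<noteq> 0" using False n_def by simp
      show ?thesis unfolding T_def R_def n_def N_def
        by (subst gen_future.simps, subst if_not_P[OF nz], simp only: Let_def)
    qed
    have step: "(\<Sum>i<N. z ^ i * T i k) = real (c ! k) * (\<alpha> + \<beta> * z ^ k)" if k: "k < N" for k
    proof (cases "c ! k = 0")
      case True
      have "T i k = 0" for i unfolding T_def True by simp
      then show ?thesis using True by simp
    next
      case False
      then have ck: "c ! k > 0" by simp
      have nz: "sum_list c \<noteq> 0" using \<open>n \<noteq> 0\<close> n_def by simp
      have kin: "k \<in> {..<length c}" using k N_def by simp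
      have ks: "k + s < N" using inv ck k unfolding ginv_def N_def by auto
      define c2 where "c2 = c[k := c ! k - 1]"
      have inv2: "ginv s c2" using inv k unfolding ginv_def c2_def N_def
        by (auto simp: nth_list_update split: if_splits)
      have C2: "Cw z c2 = C - z ^ k" unfolding c2_def C_def using Cw_upd_dec[OF k[unfolded N_def] ck] .
      have n2: "sum_list c2 = n - 1" unfolding c2_def n_def using k ck N_def
        by (simp add: sum_list_update)
      have IH2': "Cw z c2 + GF z lL g s c2 = Cw z c2 * V2"
        using IH2[OF nz refl kin ck lL g inv2[unfolded c2_def]]
        unfolding V2_def n2[symmetric] c2_def .
      have GF2: "GF z lL g s c2 = (C - z ^ k) * (V2 - 1)" using IH2' C2 by (simp add: algebra_simps)
      have len2: "length c2 = N" unfolding c2_def N_def by simp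
      have part2: "(\<Sum>i<N. z ^ i * (if 0 < c ! k then g * real (c ! k) / R *
                  gen_future lL g s (c[k := c ! k - 1]) i else 0))
          = g * real (c ! k) / R * ((C - z ^ k) * (V2 - 1))"
      proof -
        have "(\<Sum>i<N. z ^ i * (if 0 < c ! k then g * real (c ! k) / R *
                  gen_future lL g s (c[k := c ! k - 1]) i else 0))
          = g * real (c ! k) / R * GF z lL g s c2"
          using ck len2 unfolding GF_def c2_def by (simp add: sum_distrib_left algebra_simps)
        then show ?thesis unfolding GF2 .
      qed
      show ?thesis
      proof (cases "s = 0")
        case True
        have "(\<Sum>i<N. z ^ i * T i k) = (\<Sum>i<N. z ^ i * (if 0 < c ! k then g * real (c ! k) / R *
                  gen_future lL g s (c[k := c ! k - 1]) i else 0))"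
          unfolding T_def using True by simp
        also have "\<dots> = real (c ! k) * (\<alpha> + \<beta> * z ^ k)"
        proof -
          have ns: "\<not> 0 < s" using True by simp
          show ?thesis unfolding part2 \<alpha>_def \<beta>_def if_not_P[OF ns] by (rule alg1b)
        qed
        finally show ?thesis .
      next
        case sF: False
        have k1: "Suc k < N" using ks sF by simp
        have sp: "0 < s" using sF by simp
        define c1 where "c1 = c[Suc k := Suc (c ! Suc k)]"
        have inv1: "ginv (s - 1) c1" using inv ks k1 unfolding ginv_def c1_def N_def
          by (auto simp: nth_list_update split: if_splits)
        have C1: "Cw z c1 = C + z ^ Suc k" unfolding c1_def C_def using Cw_upd_inc k1 N_def by simp
        have n1: "sum_list c1 = n + 1" unfolding c1_def n_def using k1 N_def
          by (simp add: sum_list_update)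
        have IH1': "Cw z c1 + GF z lL g (s - 1) c1 = Cw z c1 * V1"
          using IH1[OF nz refl kin sp lL g inv1[unfolded c1_def]]
          unfolding V1_def n1[symmetric] c1_def .
        have GF1: "GF z lL g (s - 1) c1 = (C + z ^ Suc k) * (V1 - 1)" using IH1' C1 by (simp add: algebra_simps)
        have len1: "length c1 = N" unfolding c1_def N_def by simp
        have delta: "(\<Sum>i<N. z ^ i * (if i = Suc k then 1 else 0)) = z ^ Suc k"
          using k1 by (simp add: if_distrib[of "\<lambda>x. z ^ _ * x"] cong: if_cong)
        have part1: "(\<Sum>i<N. z ^ i * (if 0 < s then lL * real s * real (c ! k) / R *
                  ((if i = Suc k then 1 else 0) + gen_future lL g (s - 1) (c[Suc k := Suc (c ! Suc k)]) i)
             else 0)) = lL * real s * real (c ! k) / R * (z ^ Suc k + (C + z ^ Suc k) * (V1 - 1))"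
        proof -
          have "(\<Sum>i<N. z ^ i * (if 0 < s then lL * real s * real (c ! k) / R *
                  ((if i = Suc k then 1 else 0) + gen_future lL g (s - 1) (c[Suc k := Suc (c ! Suc k)]) i)
             else 0)) = lL * real s * real (c ! k) / R * ((\<Sum>i<N. z ^ i * (if i = Suc k then 1 else 0))
                 + GF z lL g (s - 1) c1)"
            using sF len1 unfolding GF_def c1_def
            by (simp add: sum_distrib_left sum.distrib algebra_simps)
          then show ?thesis unfolding delta GF1 .
        qed
        have "(\<Sum>i<N. z ^ i * T i k) = lL * real s * real (c ! k) / R * (z ^ Suc k + (C + z ^ Suc k) * (V1 - 1))
            + g * real (c ! k) / R * ((C - z ^ k) * (V2 - 1))"
          unfolding T_def
          apply (subst sum.cong[OF refl distrib_left])
          apply (subst sum.distrib)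
          unfolding part1 part2 ..
        also have "\<dots> = real (c ! k) * (\<alpha> + \<beta> * z ^ k)" unfolding \<alpha>_def \<beta>_def if_P[OF sp]
          by (rule alg1)
        finally show ?thesis .
      qed
    qed
    have "GF z lL g s c = (\<Sum>i<N. z ^ i * (\<Sum>k<N. T i k))" unfolding GF_def N_def[symmetric] gf ..
    also have "\<dots> = (\<Sum>k<N. \<Sum>i<N. z ^ i * T i k)" unfolding sum_distrib_left by (rule sum.swap)
    also have "\<dots> = (\<Sum>k<N. real (c ! k) * (\<alpha> + \<beta> * z ^ k))" using step by simp
    also have "\<dots> = \<alpha> * real n + \<beta> * C"
      unfolding real_sum_list n_def C_def Cw_def N_def
      by (simp add: distrib_left sum.distrib sum_distrib_left sum_distrib_right algebra_simps)
    finally have GFc: "GF z lL g s c = \<alpha> * real n + \<beta> * C" .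
    show ?thesis
    proof (cases "s = 0")
      case True
      have "V2 = 1" unfolding V2_def True by simp
      then show ?thesis using True GFc unfolding \<alpha>_def \<beta>_def C_def[symmetric] n_def[symmetric] by simp
    next
      case sF: False
      have np: "real n > 0" using \<open>n \<noteq> 0\<close> by simp
      have sp: "real s * lL + g > 0" using lL g by (simp add: add_nonneg_pos)
      have V: "Vf z lL g s n = g / (real n * (real s * lL + g))
     + real s * lL / (real s * lL + g) * (1 + z / real n) * V1
     + (real n - 1) * g / (real n * (real s * lL + g)) * V2"
        unfolding V1_def V2_def using Vf_rec sF \<open>n \<noteq> 0\<close> by simp
      have sp': "0 < s" using sF by simp
      show ?thesis unfolding GFc C_def[symmetric] n_def[symmetric] V \<alpha>_def \<beta>_def R_def if_P[OF sp']
        by (rule alg2) (use np sp in auto)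
    qed
  qed
qed

lemma mat_vec_index:
  assumes "v \<in> carrier_vec n" "i < nr"
  shows "(mat nr n f *\<^sub>v v) $ i = (\<Sum>j<n. f (i, j) * v $ j)"
  using assms by (simp add: scalar_prod_def atLeast0LessThan)

definition cc :: "nat \<Rightarrow> real \<Rightarrow> real \<Rightarrow> real \<Rightarrow> nat \<Rightarrow> real" where
  "cc h lG lL g i = (lG / g) * gen_mean h lL g i"

definition Wf :: "nat \<Rightarrow> real \<Rightarrow> real \<Rightarrow> real \<Rightarrow> real \<Rightarrow> nat \<Rightarrow> real" where
  "Wf h lG lL g z i = (\<Sum>j\<in>{i..<h}. cc h lG lL g j * z ^ (j + 1 - i))"

lemma Wf_step:
  assumes "i < h" "r * z = 1"
  shows "r * Wf h lG lL g z i = cc h lG lL g i + Wf h lG lL g z (Suc i)"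
proof -
  have "{i..<h} = insert i {Suc i..<h}" using assms by auto
  then have "Wf h lG lL g z i = cc h lG lL g i * z + (\<Sum>j\<in>{Suc i..<h}. cc h lG lL g j * z ^ (j + 1 - i))"
    unfolding Wf_def by simp
  moreover have "r * (\<Sum>j\<in>{Suc i..<h}. cc h lG lL g j * z ^ (j + 1 - i)) = Wf h lG lL g z (Suc i)"
    unfolding Wf_def sum_distrib_left
  proof (intro sum.cong refl)
    fix j assume "j \<in> {Suc i..<h}"
    then have "j + 1 - i = Suc (j + 1 - Suc i)" by auto
    then show "r * (cc h lG lL g j * z ^ (j + 1 - i)) = cc h lG lL g j * z ^ (j + 1 - Suc i)"
      using assms(2) by (simp add: algebra_simps)
  qed
  ultimately show ?thesis using assms(2) by (simp add: algebra_simps)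
qed

lemma A_index:
  assumes "v \<in> carrier_vec h" "i < h"
  shows "(A_mat h lG lL g *\<^sub>v v) $ i = cc h lG lL g i * v $ 0 + (if Suc i < h then v $ Suc i else 0)"
proof -
  have "(A_mat h lG lL g *\<^sub>v v) $ i = (\<Sum>j<h. ((if j = 0 then cc h lG lL g i else 0) + (if j = Suc i then 1 else 0)) * v $ j)"
    unfolding A_mat_def cc_def using mat_vec_index[OF assms] by simp
  also have "\<dots> = (\<Sum>j<h. (if j = 0 then cc h lG lL g i * v $ j else 0)) + (\<Sum>j<h. (if j = Suc i then v $ j else 0))"
    by (simp add: distrib_right sum.distrib if_distrib[of "\<lambda>x. x * _"] cong: if_cong)
  also have "\<dots> = cc h lG lL g i * v $ 0 + (if Suc i < h then v $ Suc i else 0)"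
    using assms(2) by simp
  finally show ?thesis .
qed

lemma A_eig:
  assumes "r > 0" "h \<ge> 1"
  shows "eigenvalue (A_mat h lG lL g) r \<longleftrightarrow> Wf h lG lL g (1 / r) 0 = 1"
proof -
  define z where "z = 1 / r"
  have rz: "r * z = 1" using assms unfolding z_def by simp
  have dimA: "dim_row (A_mat h lG lL g) = h" unfolding A_mat_def by simp
  have Wh: "Wf h lG lL g z h = 0" unfolding Wf_def by simp
  show ?thesis
  proof
    assume "eigenvalue (A_mat h lG lL g) r"
    then obtain v where v: "v \<in> carrier_vec h" "v \<noteq> 0\<^sub>v h" "A_mat h lG lL g *\<^sub>v v = r \<cdot>\<^sub>v v"
      unfolding eigenvalue_def eigenvector_def dimA by auto
    define x where "x = v $ 0"
    have eq: "r * v $ i = cc h lG lL g i * x + (if Suc i < h then v $ Suc i else 0)" if "i < h" for i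
    proof -
      have "(A_mat h lG lL g *\<^sub>v v) $ i = (r \<cdot>\<^sub>v v) $ i" using v(3) by simp
      then show ?thesis using A_index[OF v(1) that] v(1) that unfolding x_def by simp
    qed
    have sol: "i < h \<longrightarrow> v $ i = x * Wf h lG lL g z i" if "i \<le> h" for i
      using that
    proof (induction i rule: inc_induct)
      case base then show ?case by simp
    next
      case (step i)
      show ?case
      proof
        assume ih: "i < h"
        have "r * v $ i = cc h lG lL g i * x + x * Wf h lG lL g z (Suc i)"
        proof (cases "Suc i < h")
          case True then show ?thesis using eq[OF ih] step.IH by simp
        next
          case False then have "Suc i = h" using ih by simp
          then show ?thesis using eq[OF ih] Wh by simp
        qed
        also have "\<dots> = r * (x * Wf h lG lL g z i)"
        proof -
          have ws: "r * Wf h lG lL g z i = cc h lG lL g i + Wf h lG lL g z (Suc i)" by (rule Wf_step[OF ih rz])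
          have "r * (x * Wf h lG lL g z i) = x * (r * Wf h lG lL g z i)" by simp
          then show ?thesis unfolding ws by (simp add: distrib_left)
        qed
        finally show "v $ i = x * Wf h lG lL g z i" using assms(1) by simp
      qed
    qed
    have "x \<noteq> 0"
    proof
      assume "x = 0"
      then have "v = 0\<^sub>v h" using sol v(1) by (intro eq_vecI) auto
      then show False using v(2) by simp
    qed
    moreover have "x = x * Wf h lG lL g z 0" using sol[of 0] assms(2) unfolding x_def by simp
    ultimately show "Wf h lG lL g (1 / r) 0 = 1" unfolding z_def[symmetric] by simp
  next
    assume W0: "Wf h lG lL g (1 / r) 0 = 1"
    define v where "v = vec h (\<lambda>i. Wf h lG lL g z i)"
    have vc: "v \<in> carrier_vec h" unfolding v_def by simp
    have v0: "v $ 0 = 1" unfolding v_def using W0 assms(2) z_def by simp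
    have "A_mat h lG lL g *\<^sub>v v = r \<cdot>\<^sub>v v"
    proof (rule eq_vecI)
      fix i assume "i < dim_vec (r \<cdot>\<^sub>v v)"
      then have i: "i < h" using vc by simp
      have "(A_mat h lG lL g *\<^sub>v v) $ i = cc h lG lL g i + Wf h lG lL g z (Suc i)"
      proof (cases "Suc i < h")
        case True
        have e: "(A_mat h lG lL g *\<^sub>v v) $ i = cc h lG lL g i * v $ 0 + (if Suc i < h then v $ Suc i else 0)"
          by (rule A_index[OF vc i])
        show ?thesis using e v0 True by (simp add: v_def)
      next
        case False then have "Suc i = h" using i by simp
        have e: "(A_mat h lG lL g *\<^sub>v v) $ i = cc h lG lL g i * v $ 0 + (if Suc i < h then v $ Suc i else 0)"
          by (rule A_index[OF vc i])
        show ?thesis using e v0 False Wh \<open>Suc i = h\<close> by simp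
      qed
      also have "\<dots> = r * v $ i"
      proof -
        have ws: "r * Wf h lG lL g z i = cc h lG lL g i + Wf h lG lL g z (Suc i)" by (rule Wf_step[OF i rz])
        show ?thesis using ws i unfolding v_def by simp
      qed
      finally show "(A_mat h lG lL g *\<^sub>v v) $ i = (r \<cdot>\<^sub>v v) $ i" using i vc by simp
    next
      show "dim_vec (A_mat h lG lL g *\<^sub>v v) = dim_vec (r \<cdot>\<^sub>v v)" using vc dimA by simp
    qed
    moreover have "v \<noteq> 0\<^sub>v h"
    proof
      assume "v = 0\<^sub>v h"
      then have "v $ 0 = 0" using assms(2) by simp
      then show False using v0 by simp
    qed
    ultimately show "eigenvalue (A_mat h lG lL g) r"
      unfolding eigenvalue_def eigenvector_def dimA using vc by auto
  qed
qed

lemma hh_set: "set (hh_states h) = {(a, b). 1 \<le> a \<and> 1 \<le> b \<and> a + b \<le> h} \<union> {(0, 1)}"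
proof (rule equalityI)
  show "set (hh_states h) \<subseteq> {(a, b). 1 \<le> a \<and> 1 \<le> b \<and> a + b \<le> h} \<union> {(0, 1)}"
    unfolding hh_states_def by auto
next
  show "{(a, b). 1 \<le> a \<and> 1 \<le> b \<and> a + b \<le> h} \<union> {(0, 1)} \<subseteq> set (hh_states h)"
  proof
    fix t assume "t \<in> {(a, b). 1 \<le> a \<and> 1 \<le> b \<and> a + b \<le> h} \<union> {(0, 1)}"
    then show "t \<in> set (hh_states h)"
    proof
      assume "t \<in> {(a, b). 1 \<le> a \<and> 1 \<le> b \<and> a + b \<le> h}"
      then obtain a b where t: "t = (a, b)" "1 \<le> a" "1 \<le> b" "a + b \<le> h" by auto
      then have "a \<in> set [1..<h]" "b \<in> set [1..<h + 1 - a]" by auto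
      then show ?thesis unfolding hh_states_def t(1) by (auto intro!: bexI[of _ a])
    qed (simp add: hh_states_def)
  qed
qed

lemma map_Pair_inj: "map (Pair x) l = map (Pair y) l' \<Longrightarrow> l \<noteq> [] \<Longrightarrow> x = y"
  by (cases l; cases l') auto

lemma hh_distinct: "distinct (hh_states h)"
  unfolding hh_states_def
  apply (auto simp: distinct_map inj_on_def intro!: distinct_concat dest!: map_Pair_inj)
  apply arith
  done

definition pinf :: "real \<Rightarrow> real \<Rightarrow> nat \<Rightarrow> real" where
  "pinf lL g a = real a * lL / (real a * lL + g)"
definition prec :: "real \<Rightarrow> real \<Rightarrow> nat \<Rightarrow> nat \<Rightarrow> real" where
  "prec lL g a b = (real b - 1) * g / (real b * (real a * lL + g))"
definition nxt :: "nat \<Rightarrow> nat \<Rightarrow> nat \<times> nat" where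
  "nxt a b = (if a = 1 then (0, 1) else (a - 1, b + 1))"

lemma sum_delta_cond:
  fixes K :: real and w :: "'a \<Rightarrow> real"
  assumes "finite A" "c \<longrightarrow> y \<in> A"
  shows "(\<Sum>t\<in>A. (if c \<and> t = y then K else 0) * w t) = (if c then K * w y else 0)"
proof (cases c)
  case True
  then have "(\<Sum>t\<in>A. (if c \<and> t = y then K else 0) * w t) = (\<Sum>t\<in>A. if t = y then K * w t else 0)"
    by (intro sum.cong refl) simp
  also have "\<dots> = K * w y" using assms True by (simp add: sum.delta')
  finally show ?thesis using True by simp
qed simp

lemma p_row:
  assumes "(a, b) \<in> set (hh_states h)" "a \<ge> 1"
  shows "(\<Sum>t\<in>set (hh_states h). p_entry lL g (a, b) t * w t)
       = pinf lL g a * w (nxt a b) + prec lL g a b * w (a, b - 1)"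
proof -
  let ?A = "set (hh_states h)"
  have ab: "1 \<le> b" "a + b \<le> h" using assms unfolding hh_set by auto
  have "(\<Sum>t\<in>?A. p_entry lL g (a, b) t * w t) =
     (\<Sum>t\<in>?A. (if a > 1 \<and> t = (a - 1, b + 1) then real a * lL / (real a * lL + g) else 0) * w t)
   + (\<Sum>t\<in>?A. (if a = 1 \<and> t = (0, 1) then lL / (lL + g) else 0) * w t)
   + (\<Sum>t\<in>?A. (if b \<ge> 2 \<and> t = (a, b - 1) then (real b - 1) * g / (real b * (real a * lL + g)) else 0) * w t)"
    unfolding p_entry_def using assms(2) by (simp add: distrib_right sum.distrib)
  also have "\<dots> = (if a > 1 then real a * lL / (real a * lL + g) * w (a - 1, b + 1) else 0)
     + (if a = 1 then lL / (lL + g) * w (0, 1) else 0)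
     + (if b \<ge> 2 then (real b - 1) * g / (real b * (real a * lL + g)) * w (a, b - 1) else 0)"
  proof -
    have m1: "1 < a \<longrightarrow> (a - 1, b + 1) \<in> ?A" using ab unfolding hh_set by auto
    have m2: "a = 1 \<longrightarrow> (0, 1) \<in> ?A" unfolding hh_set by auto
    have m3: "2 \<le> b \<longrightarrow> (a, b - 1) \<in> ?A" using ab assms(2) unfolding hh_set by auto
    show ?thesis
      unfolding sum_delta_cond[OF finite_set m1] sum_delta_cond[OF finite_set m2] sum_delta_cond[OF finite_set m3] ..
  qed
  also have "\<dots> = pinf lL g a * w (nxt a b) + prec lL g a b * w (a, b - 1)"
    unfolding pinf_def prec_def nxt_def using assms(2) ab(1)
    by (cases "a = 1"; cases "b \<ge> 2") auto
  finally show ?thesis .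
qed

lemma phi_row:
  assumes "(a, b) \<in> set (hh_states h)" "a \<ge> 1" "h \<ge> 2"
  shows "(\<Sum>t\<in>set (hh_states h). phi_entry h lG lL g (a, b) t * w t)
       = pinf lL g a / real b * w (nxt a b) + lG / (real b * (real a * lL + g)) * w (h - 1, 1)"
proof -
  let ?A = "set (hh_states h)"
  have ab: "1 \<le> b" "a + b \<le> h" using assms unfolding hh_set by auto
  have "(\<Sum>t\<in>?A. phi_entry h lG lL g (a, b) t * w t) =
     (\<Sum>t\<in>?A. (if a > 1 \<and> t = (a - 1, b + 1) then real a * lL / (real b * (real a * lL + g)) else 0) * w t)
   + (\<Sum>t\<in>?A. (if a = 1 \<and> t = (0, 1) then lL / (real b * (lL + g)) else 0) * w t)
   + (\<Sum>t\<in>?A. (if True \<and> t = (h - 1, 1) then lG / (real b * (real a * lL + g)) else 0) * w t)"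
    unfolding phi_entry_def using assms(2) by (simp add: distrib_right sum.distrib)
  also have "\<dots> = (if a > 1 then real a * lL / (real b * (real a * lL + g)) * w (a - 1, b + 1) else 0)
     + (if a = 1 then lL / (real b * (lL + g)) * w (0, 1) else 0)
     + (if True then lG / (real b * (real a * lL + g)) * w (h - 1, 1) else 0)"
  proof -
    have m1: "1 < a \<longrightarrow> (a - 1, b + 1) \<in> ?A" using ab unfolding hh_set by auto
    have m2: "a = 1 \<longrightarrow> (0, 1) \<in> ?A" unfolding hh_set by auto
    have m3: "True \<longrightarrow> (h - 1, 1) \<in> ?A" using assms(3) unfolding hh_set by auto
    show ?thesis
      unfolding sum_delta_cond[OF finite_set m1] sum_delta_cond[OF finite_set m2] sum_delta_cond[OF finite_set m3] ..
  qed
  also have "\<dots> = pinf lL g a / real b * w (nxt a b) + lG / (real b * (real a * lL + g)) * w (h - 1, 1)"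
    unfolding pinf_def nxt_def using assms(2)
    by (cases "a = 1") auto
  finally show ?thesis .
qed

lemma p_row0: "(\<Sum>t\<in>set (hh_states h). p_entry lL g (0, 1) t * w t) = 0"
  unfolding p_entry_def by simp

lemma phi_row0:
  assumes "h \<ge> 2"
  shows "(\<Sum>t\<in>set (hh_states h). phi_entry h lG lL g (0, 1) t * w t) = lG / g * w (h - 1, 1)"
proof -
  have "(\<Sum>t\<in>set (hh_states h). phi_entry h lG lL g (0, 1) t * w t)
     = (\<Sum>t\<in>set (hh_states h). (if True \<and> t = (h - 1, 1) then lG / g else 0) * w t)"
    unfolding phi_entry_def by simp
  also have "\<dots> = lG / g * w (h - 1, 1)" using assms by (subst sum_delta_cond[OF finite_set]) (auto simp: hh_set)
  finally show ?thesis .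
qed

lemma uniq:
  fixes x :: "nat \<times> nat \<Rightarrow> real"
  assumes x0: "x (0, 1) = 0"
    and rec: "\<And>a b. 1 \<le> a \<Longrightarrow> 1 \<le> b \<Longrightarrow> a + b \<le> h \<Longrightarrow> x (a, b) = \<alpha> a b * x (nxt a b) + \<beta> a b * x (a, b - 1)"
    and b1: "\<And>a. \<beta> a 1 = 0"
  shows "1 \<le> a \<Longrightarrow> 1 \<le> b \<Longrightarrow> a + b \<le> h \<Longrightarrow> x (a, b) = 0"
proof (induction a arbitrary: b rule: less_induct)
  case (less a)
  have nx: "x (nxt a b') = 0" if "1 \<le> b'" "a + b' \<le> h" for b'
  proof (cases "a = 1")
    case True then show ?thesis using x0 unfolding nxt_def by simp
  next
    case False
    then have "x (a - 1, b' + 1) = 0" using less.prems that by (intro less.IH) auto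
    then show ?thesis using False unfolding nxt_def by simp
  qed
  show ?case using less.prems
  proof (induction b)
    case 0 then show ?case by simp
  next
    case (Suc b)
    show ?case
    proof (cases "b = 0")
      case True
      then show ?thesis using rec[of a "Suc b"] Suc.prems nx[of "Suc b"] b1 by simp
    next
      case False
      then have "x (a, b) = 0" using Suc by simp
      then show ?thesis using rec[of a "Suc b"] Suc.prems nx[of "Suc b"] by simp
    qed
  qed
qed

lemma alg3: fixes r z lG Vs g Vab b q pi Vn pr Vm :: real
  assumes "r * z = 1" "lG * Vs = r * g" "Vab = g / (b * q) + pi * (1 + z / b) * Vn + pr * Vm" "b \<noteq> 0" "q \<noteq> 0"
  shows "pi / b * Vn + lG / (b * q) * Vs = r * (Vab - (pi * Vn + pr * Vm))"
proof -
  have "lG / (b * q) * Vs = r * g / (b * q)" using assms(2) by (simp add: field_simps)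
  moreover have "r * (pi * z / b * Vn) = pi / b * Vn" using assms(1) by (simp add: field_simps)
  ultimately show ?thesis unfolding assms(3) using assms(4,5) by (simp add: field_simps)
qed
lemma alg4: fixes r z lG v0 g wab wn wm Vab b q pi Vn pr Vm K :: real
  assumes "r * z = 1" "pi / b * wn + lG / (b * q) * v0 = r * (wab - (pi * wn + pr * wm))"
    "Vab = g / (b * q) + pi * (1 + z / b) * Vn + pr * Vm" "K = z * v0 * lG / g" "g \<noteq> 0" "b \<noteq> 0" "q \<noteq> 0"
  shows "wab - K * Vab = (pi * (1 + z / b)) * (wn - K * Vn) + pr * (wm - K * Vm)"
proof -
  note nz = assms(6,7)
  have "z * (pi / b * wn + lG / (b * q) * v0) = wab - (pi * wn + pr * wm)"
    using assms(1,2) by (metis mult.assoc mult.commute mult_1)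
  then have w: "wab = pi * (1 + z / b) * wn + pr * wm + z * lG * v0 / (b * q)" using nz by (simp add: field_simps)
  have "K * (g / (b * q)) = z * lG * v0 / (b * q)" using assms(4,5) by (simp add: field_simps)
  then show ?thesis unfolding w assms(3) using nz by (simp add: field_simps)
qed

lemma Wf0_Vf:
  assumes "h \<ge> 1" "lL > 0" "g > 0"
  shows "Wf h lG lL g z 0 = z * (lG / g) * Vf z lL g (h - 1) 1"
proof -
  define e0 where "e0 = (1::nat) # replicate (h - 1) 0"
  have len: "length e0 = h" unfolding e0_def using assms(1) by simp
  have e0k: "e0 ! k = (if k = 0 then 1 else 0)" if "k < h" for k
    unfolding e0_def using that by (cases k) auto
  have "Cw z e0 = (\<Sum>k<h. if k = 0 then 1 else 0)" unfolding Cw_def len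
    by (intro sum.cong refl) (simp add: e0k)
  then have C: "Cw z e0 = 1" using assms(1) by (simp add: sum.delta)
  have sl: "sum_list e0 = 1" unfolding e0_def by simp
  have inv: "ginv (h - 1) e0" unfolding ginv_def len using e0k by auto
  have key: "1 + GF z lL g (h - 1) e0 = Vf z lL g (h - 1) 1"
    using main_GF[OF assms(2,3) inv, of z] C sl by simp
  have "Wf h lG lL g z 0 = (\<Sum>j<h. (lG / g) * gen_mean h lL g j * z ^ (j + 1))"
    unfolding Wf_def cc_def by (simp add: atLeast0LessThan)
  also have "\<dots> = z * (lG / g) * (\<Sum>j<h. z ^ j * gen_mean h lL g j)"
    by (simp add: sum_distrib_left algebra_simps)
  also have "(\<Sum>j<h. z ^ j * gen_mean h lL g j) = (\<Sum>j<h. (if j = 0 then 1 else 0)) + GF z lL g (h - 1) e0"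
    unfolding gen_mean_def GF_def len e0_def[symmetric] by (simp add: distrib_left sum.distrib if_distrib[of "\<lambda>x. _ * x"] cong: if_cong)
  also have "(\<Sum>j<h. (if j = 0 then 1 else 0 :: real)) = 1" using assms(1) by (simp add: sum.delta)
  finally show ?thesis using key by simp
qed

definition VS :: "real \<Rightarrow> real \<Rightarrow> real \<Rightarrow> nat \<times> nat \<Rightarrow> real" where
  "VS z lL g t = Vf z lL g (fst t) (snd t)"

lemma VS_nxt: "a \<ge> 1 \<Longrightarrow> VS z lL g (nxt a b) = Vf z lL g (a - 1) (b + 1)"
  unfolding VS_def nxt_def by auto

lemma VS_rec:
  assumes "a \<ge> 1" "b \<ge> 1"
  shows "VS z lL g (a, b) = g / (real b * (real a * lL + g)) + pinf lL g a * (1 + z / real b) * VS z lL g (nxt a b)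
     + prec lL g a b * VS z lL g (a, b - 1)"
  unfolding VS_nxt[OF assms(1)] using Vf_rec[of a b z lL g] assms unfolding VS_def pinf_def prec_def
  by (simp add: algebra_simps)

lemma prec1: "prec lL g a 1 = 0" unfolding prec_def by simp

definition idx :: "nat \<Rightarrow> nat \<times> nat \<Rightarrow> nat" where
  "idx h t = the_inv_into {..<length (hh_states h)} ((!) (hh_states h)) t"

lemma idx_nth: "j < length (hh_states h) \<Longrightarrow> idx h (hh_states h ! j) = j"
  unfolding idx_def by (rule the_inv_into_f_f) (auto intro: inj_on_nth hh_distinct)

lemma idx_mem: "s \<in> set (hh_states h) \<Longrightarrow> idx h s < length (hh_states h) \<and> hh_states h ! idx h s = s"
  by (metis in_set_conv_nth idx_nth)

lemma sum_set_nth: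
  "(\<Sum>t\<in>set (hh_states h). F t) = (\<Sum>j<length (hh_states h). F (hh_states h ! j))"
  using sum.reindex_bij_betw[OF bij_betw_nth[OF hh_distinct refl refl], of F] by simp

lemma mat_S_index:
  assumes "v \<in> carrier_vec (length (hh_states h))" "i < length (hh_states h)"
  shows "(mat (length (hh_states h)) (length (hh_states h)) (\<lambda>(i, j). f (hh_states h ! i) (hh_states h ! j)) *\<^sub>v v) $ i
     = (\<Sum>t\<in>set (hh_states h). f (hh_states h ! i) t * v $ idx h t)"
  unfolding mat_vec_index[OF assms] sum_set_nth by (simp add: idx_nth)

lemma states_cases:
  assumes "s \<in> set (hh_states h)"
  obtains "s = (0, 1)" | a b where "s = (a, b)" "1 \<le> a" "1 \<le> b" "a + b \<le> h"
  using assms unfolding hh_set by auto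

lemma vec_eq_states:
  assumes "x \<in> carrier_vec (length (hh_states h))" "y \<in> carrier_vec (length (hh_states h))"
  shows "x = y \<longleftrightarrow> (\<forall>s\<in>set (hh_states h). x $ idx h s = y $ idx h s)"
proof
  assume "\<forall>s\<in>set (hh_states h). x $ idx h s = y $ idx h s"
  then have "x $ i = y $ i" if "i < length (hh_states h)" for i
    using that idx_nth[OF that] nth_mem[OF that] by metis
  then show "x = y" using assms by (intro eq_vecI) auto
qed simp

context
  fixes h :: nat and lG lL g :: real
  assumes h2: "h \<ge> 2" and lGp: "lG > 0" and lLp: "lL > 0" and gp: "g > 0"
begin

abbreviation "SS \<equiv> hh_states h"
abbreviation "nn \<equiv> length (hh_states h)"

lemma Pm_def': "P_mat h lL g = mat nn nn (\<lambda>(i, j). p_entry lL g (SS ! i) (SS ! j))"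
  unfolding P_mat_def Let_def ..
lemma Fm_def': "Phi_mat h lG lL g = mat nn nn (\<lambda>(i, j). phi_entry h lG lL g (SS ! i) (SS ! j))"
  unfolding Phi_mat_def Let_def ..

lemma Pm_carrier: "P_mat h lL g \<in> carrier_mat nn nn" unfolding Pm_def' by simp
lemma Fm_carrier: "Phi_mat h lG lL g \<in> carrier_mat nn nn" unfolding Fm_def' by simp

lemma IP_index:
  assumes "v \<in> carrier_vec nn" "s \<in> set SS"
  shows "((1\<^sub>m nn - P_mat h lL g) *\<^sub>v v) $ idx h s = v $ idx h s - (\<Sum>t\<in>set SS. p_entry lL g s t * v $ idx h t)"
proof -
  have i: "idx h s < nn" "SS ! idx h s = s"
    using assms(2) by (metis in_set_conv_nth idx_nth)+
  have "(1\<^sub>m nn - P_mat h lL g) *\<^sub>v v = 1\<^sub>m nn *\<^sub>v v - P_mat h lL g *\<^sub>v v"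
    using Pm_carrier assms(1) by (intro minus_mult_distrib_mat_vec) auto
  then show ?thesis using i assms(1) mat_S_index[OF assms(1) i(1), of "p_entry lL g"]
    unfolding Pm_def' by simp
qed

lemma Fm_index:
  assumes "v \<in> carrier_vec nn" "s \<in> set SS"
  shows "(Phi_mat h lG lL g *\<^sub>v v) $ idx h s = (\<Sum>t\<in>set SS. phi_entry h lG lL g s t * v $ idx h t)"
proof -
  have i: "idx h s < nn" "SS ! idx h s = s"
    using assms(2) by (metis in_set_conv_nth idx_nth)+
  show ?thesis using i mat_S_index[OF assms(1) i(1), of "phi_entry h lG lL g"] unfolding Fm_def' by simp
qed

lemma IP_invertible: "det (1\<^sub>m nn - P_mat h lL g) \<noteq> 0"
proof
  have IPc: "1\<^sub>m nn - P_mat h lL g \<in> carrier_mat nn nn" using Pm_carrier by (rule minus_carrier_mat)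
  assume "det (1\<^sub>m nn - P_mat h lL g) = 0"
  then obtain v where v: "v \<in> carrier_vec nn" "v \<noteq> 0\<^sub>v nn" "(1\<^sub>m nn - P_mat h lL g) *\<^sub>v v = 0\<^sub>v nn"
    using det_0_iff_vec_prod_zero_field[OF IPc] by auto
  define w where "w t = v $ idx h t" for t
  have eq: "w s = (\<Sum>t\<in>set SS. p_entry lL g s t * w t)" if "s \<in> set SS" for s
  proof -
    have "idx h s < nn" using that by (metis in_set_conv_nth idx_nth)
    then have "((1\<^sub>m nn - P_mat h lL g) *\<^sub>v v) $ idx h s = 0" using v(3) by simp
    then show ?thesis using IP_index[OF v(1) that] unfolding w_def by simp
  qed
  have x0: "w (0, 1) = 0" using eq[of "(0, 1)"] p_row0 by (simp add: hh_set)
  have rec: "w (a, b) = pinf lL g a * w (nxt a b) + prec lL g a b * w (a, b - 1)"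
    if "1 \<le> a" "1 \<le> b" "a + b \<le> h" for a b
  proof -
    have m: "(a, b) \<in> set SS" using that by (simp add: hh_set)
    show ?thesis using eq[OF m] p_row[OF m that(1)] by simp
  qed
  have "w s = 0" if "s \<in> set SS" for s
    using that
  proof (cases rule: states_cases)
    case 1 then show ?thesis using x0 by simp
  next
    case (2 a b) then show ?thesis using uniq[of w h "\<lambda>a b. pinf lL g a" "prec lL g", OF x0 rec prec1] by simp
  qed
  then have "v = 0\<^sub>v nn" using vec_eq_states[OF v(1), of "0\<^sub>v nn"] unfolding w_def by (auto simp: idx_mem)
  then show False using v(2) by simp
qed


lemma IP_carrier: "1\<^sub>m nn - P_mat h lL g \<in> carrier_mat nn nn"
  using Pm_carrier by (rule minus_carrier_mat)

lemma Binv: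
  obtains B where "mat_inverse (1\<^sub>m nn - P_mat h lL g) = Some B"
    "(1\<^sub>m nn - P_mat h lL g) * B = 1\<^sub>m nn" "B * (1\<^sub>m nn - P_mat h lL g) = 1\<^sub>m nn" "B \<in> carrier_mat nn nn"
proof -
  have U: "1\<^sub>m nn - P_mat h lL g \<in> Units (ring_mat TYPE(real) nn ())"
    by (rule det_non_zero_imp_unit[OF IP_carrier IP_invertible])
  have "mat_inverse (1\<^sub>m nn - P_mat h lL g) \<noteq> None"
  proof
    assume N: "mat_inverse (1\<^sub>m nn - P_mat h lL g) = None"
    show False using mat_inverse(1)[OF IP_carrier N, where b="()"] U by blast
  qed
  then obtain B where B: "mat_inverse (1\<^sub>m nn - P_mat h lL g) = Some B" by auto
  show ?thesis using that[OF B] mat_inverse(2)[OF IP_carrier B] by blast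
qed

lemma eqs_iff:
  assumes v: "v \<in> carrier_vec nn"
  shows "Phi_mat h lG lL g *\<^sub>v v = r \<cdot>\<^sub>v ((1\<^sub>m nn - P_mat h lL g) *\<^sub>v v) \<longleftrightarrow>
    (\<forall>s\<in>set SS. (\<Sum>t\<in>set SS. phi_entry h lG lL g s t * v $ idx h t)
        = r * (v $ idx h s - (\<Sum>t\<in>set SS. p_entry lL g s t * v $ idx h t)))"
proof -
  have c1: "Phi_mat h lG lL g *\<^sub>v v \<in> carrier_vec nn" using Fm_carrier v by simp
  have c2: "r \<cdot>\<^sub>v ((1\<^sub>m nn - P_mat h lL g) *\<^sub>v v) \<in> carrier_vec nn" using IP_carrier v by simp
  have "(r \<cdot>\<^sub>v ((1\<^sub>m nn - P_mat h lL g) *\<^sub>v v)) $ idx h s = r * (((1\<^sub>m nn - P_mat h lL g) *\<^sub>v v) $ idx h s)"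
    if "s \<in> set SS" for s
    by (subst index_smult_vec) (use idx_mem[OF that] IP_carrier in auto)
  then show ?thesis unfolding vec_eq_states[OF c1 c2] using Fm_index[OF v] IP_index[OF v] by simp
qed

lemma M_eig_iff:
  assumes rp: "r > 0"
  shows "eigenvalue (M_mat h lG lL g) r \<longleftrightarrow> (1 / r) * (lG / g) * Vf (1 / r) lL g (h - 1) 1 = 1"
proof -
  obtain B where B: "mat_inverse (1\<^sub>m nn - P_mat h lL g) = Some B"
    "(1\<^sub>m nn - P_mat h lL g) * B = 1\<^sub>m nn" "B * (1\<^sub>m nn - P_mat h lL g) = 1\<^sub>m nn" "B \<in> carrier_mat nn nn"
    using Binv by blast
  let ?IP = "1\<^sub>m nn - P_mat h lL g"
  let ?F = "Phi_mat h lG lL g"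
  have M: "M_mat h lG lL g = B * ?F" unfolding M_mat_def Let_def B(1) by simp
  have dimM: "dim_row (M_mat h lG lL g) = nn" unfolding M using B(4) by simp
  have key: "(B * ?F) *\<^sub>v v = r \<cdot>\<^sub>v v \<longleftrightarrow> ?F *\<^sub>v v = r \<cdot>\<^sub>v (?IP *\<^sub>v v)" if v: "v \<in> carrier_vec nn" for v
  proof
    assume "(B * ?F) *\<^sub>v v = r \<cdot>\<^sub>v v"
    then have "B *\<^sub>v (?F *\<^sub>v v) = r \<cdot>\<^sub>v v" using B(4) Fm_carrier v by simp
    then have "?IP *\<^sub>v (B *\<^sub>v (?F *\<^sub>v v)) = ?IP *\<^sub>v (r \<cdot>\<^sub>v v)" by simp
    moreover have "?IP *\<^sub>v (B *\<^sub>v (?F *\<^sub>v v)) = ?F *\<^sub>v v"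
    proof -
      have "?IP *\<^sub>v (B *\<^sub>v (?F *\<^sub>v v)) = (?IP * B) *\<^sub>v (?F *\<^sub>v v)"
        using B(4) IP_carrier Fm_carrier v by (intro assoc_mult_mat_vec[symmetric]) auto
      also have "\<dots> = ?F *\<^sub>v v" unfolding B(2) using Fm_carrier v by simp
      finally show ?thesis .
    qed
    moreover have "?IP *\<^sub>v (r \<cdot>\<^sub>v v) = r \<cdot>\<^sub>v (?IP *\<^sub>v v)" by (rule mult_mat_vec[OF IP_carrier v])
    ultimately show "?F *\<^sub>v v = r \<cdot>\<^sub>v (?IP *\<^sub>v v)" by simp
  next
    assume e: "?F *\<^sub>v v = r \<cdot>\<^sub>v (?IP *\<^sub>v v)"
    have "(B * ?F) *\<^sub>v v = B *\<^sub>v (?F *\<^sub>v v)" using B(4) Fm_carrier v by simp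
    also have "\<dots> = B *\<^sub>v (r \<cdot>\<^sub>v (?IP *\<^sub>v v))" unfolding e ..
    also have "\<dots> = r \<cdot>\<^sub>v (B *\<^sub>v (?IP *\<^sub>v v))" using B(4) IP_carrier v by (intro mult_mat_vec) auto
    also have "B *\<^sub>v (?IP *\<^sub>v v) = v"
    proof -
      have "B *\<^sub>v (?IP *\<^sub>v v) = (B * ?IP) *\<^sub>v v"
        using B(4) IP_carrier v by (intro assoc_mult_mat_vec[symmetric]) auto
      then show ?thesis unfolding B(3) using v by simp
    qed
    finally show "(B * ?F) *\<^sub>v v = r \<cdot>\<^sub>v v" .
  qed
  define z where "z = 1 / r"
  have rz: "r * z = 1" using rp unfolding z_def by simp
  define Vs where "Vs = Vf z lL g (h - 1) 1"
  have hm: "(h - 1, 1) \<in> set SS" "(0, 1) \<in> set SS" using h2 by (auto simp: hh_set)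
  have VS01: "VS z lL g (0, 1) = 1" unfolding VS_def by simp
  have VSh: "VS z lL g (h - 1, 1) = Vs" unfolding VS_def Vs_def by simp
  have qpos: "real a * lL + g \<noteq> 0" for a using lLp gp by (metis add_nonneg_pos mult_nonneg_nonneg of_nat_0_le_iff less_imp_le less_irrefl)
  show ?thesis unfolding z_def[symmetric] Vs_def[symmetric]
  proof
    assume "eigenvalue (M_mat h lG lL g) r"
    then obtain v where v: "v \<in> carrier_vec nn" "v \<noteq> 0\<^sub>v nn" "(B * ?F) *\<^sub>v v = r \<cdot>\<^sub>v v"
      unfolding eigenvalue_def eigenvector_def dimM M using B(4) by auto
    define w where "w t = v $ idx h t" for t
    have E: "(\<Sum>t\<in>set SS. phi_entry h lG lL g s t * w t) = r * (w s - (\<Sum>t\<in>set SS. p_entry lL g s t * w t))"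
      if "s \<in> set SS" for s
      using key[OF v(1)] v(3) eqs_iff[OF v(1)] that unfolding w_def by blast
    define v0 where "v0 = w (h - 1, 1)"
    define K where "K = z * v0 * lG / g"
    define x where "x t = w t - K * VS z lL g t" for t
    have x0: "x (0, 1) = 0"
    proof -
      have e1: "lG / g * v0 = r * w (0, 1)" using E[OF hm(2)] phi_row0[OF h2] p_row0 unfolding v0_def by simp
      have "w (0, 1) = (r * z) * w (0, 1)" using rz by simp
      also have "\<dots> = z * (r * w (0, 1))" by (simp add: algebra_simps)
      also have "\<dots> = z * (lG / g * v0)" using e1 by simp
      also have "\<dots> = K" unfolding K_def using gp by (simp add: field_simps)
      finally have "w (0, 1) = K" .
      then show ?thesis unfolding x_def VS01 by simp
    qed
    have xrec: "x (a, b) = (pinf lL g a * (1 + z / real b)) * x (nxt a b) + prec lL g a b * x (a, b - 1)"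
      if ab: "1 \<le> a" "1 \<le> b" "a + b \<le> h" for a b
    proof -
      have m: "(a, b) \<in> set SS" using ab by (simp add: hh_set)
      have e: "pinf lL g a / real b * w (nxt a b) + lG / (real b * (real a * lL + g)) * v0
          = r * (w (a, b) - (pinf lL g a * w (nxt a b) + prec lL g a b * w (a, b - 1)))"
        using E[OF m] unfolding phi_row[OF m ab(1) h2] p_row[OF m ab(1)] v0_def .
      show ?thesis unfolding x_def
        by (rule alg4[OF rz e VS_rec[OF ab(1,2)] K_def]) (use gp ab(2) qpos in auto)
    qed
    have wK: "w s = K * VS z lL g s" if "s \<in> set SS" for s
    proof -
      have "x s = 0" using that
      proof (cases rule: states_cases)
        case 1 then show ?thesis using x0 by simp
      next
        case (2 a b) then show ?thesis
          using uniq[of x h "\<lambda>a b. pinf lL g a * (1 + z / real b)" "prec lL g", OF x0 xrec prec1] by simp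
      qed
      then show ?thesis unfolding x_def by simp
    qed
    have "v0 \<noteq> 0"
    proof
      assume "v0 = 0"
      then have "\<forall>s\<in>set SS. v $ idx h s = 0\<^sub>v nn $ idx h s" using wK idx_mem unfolding K_def w_def by simp
      then have "v = 0\<^sub>v nn" using vec_eq_states[OF v(1), of "0\<^sub>v nn"] by simp
      then show False using v(2) by simp
    qed
    moreover have "v0 = K * Vs" using wK[OF hm(1)] VSh unfolding v0_def by simp
    ultimately show "z * (lG / g) * Vs = 1"
    proof -
      assume nz: "v0 \<noteq> 0" and e: "v0 = K * Vs"
      have "K * Vs = v0 * (z * (lG / g) * Vs)" unfolding K_def by (simp add: field_simps)
      then have "v0 * 1 = v0 * (z * (lG / g) * Vs)" using e by simp
      then have "1 = z * (lG / g) * Vs" using mult_left_cancel[OF nz] by blast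
      then show ?thesis by (rule sym)
    qed
  next
    assume cond: "z * (lG / g) * Vs = 1"
    have lGVs: "lG * Vs = r * g"
    proof -
      have "lG / g * Vs = (r * z) * (lG / g * Vs)" using rz by simp
      also have "\<dots> = r * (z * (lG / g) * Vs)" by (simp only: mult.assoc)
      also have "\<dots> = r" unfolding cond by simp
      finally have e: "lG / g * Vs = r" .
      have "lG * Vs = (lG / g * Vs) * g" using gp by simp
      then show ?thesis unfolding e .
    qed
    define v where "v = vec nn (\<lambda>i. VS z lL g (SS ! i))"
    have vc: "v \<in> carrier_vec nn" unfolding v_def by simp
    have vw: "v $ idx h t = VS z lL g t" if "t \<in> set SS" for t
      unfolding v_def using idx_mem[OF that] by simp
    have E: "(\<Sum>t\<in>set SS. phi_entry h lG lL g s t * v $ idx h t)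
        = r * (v $ idx h s - (\<Sum>t\<in>set SS. p_entry lL g s t * v $ idx h t))" if s: "s \<in> set SS" for s
    proof -
      have S1: "(\<Sum>t\<in>set SS. phi_entry h lG lL g s t * v $ idx h t) = (\<Sum>t\<in>set SS. phi_entry h lG lL g s t * VS z lL g t)"
        by (intro sum.cong refl) (simp add: vw)
      have S2: "(\<Sum>t\<in>set SS. p_entry lL g s t * v $ idx h t) = (\<Sum>t\<in>set SS. p_entry lL g s t * VS z lL g t)"
        by (intro sum.cong refl) (simp add: vw)
      have "(\<Sum>t\<in>set SS. phi_entry h lG lL g s t * VS z lL g t)
        = r * (VS z lL g s - (\<Sum>t\<in>set SS. p_entry lL g s t * VS z lL g t))" using s
      proof (cases rule: states_cases)
        case 1
        show ?thesis unfolding 1 phi_row0[OF h2] p_row0 VSh VS01 using lGVs gp by (simp add: field_simps)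
      next
        case (2 a b)
        have m: "(a, b) \<in> set SS" using s 2 by simp
        show ?thesis unfolding 2(1) phi_row[OF m 2(2) h2] p_row[OF m 2(2)] VSh
          by (rule alg3[OF rz lGVs VS_rec[OF 2(2,3)]]) (use 2 qpos in auto)
      qed
      then show ?thesis unfolding S1 S2 vw[OF s] .
    qed
    have "(B * ?F) *\<^sub>v v = r \<cdot>\<^sub>v v" using key[OF vc] eqs_iff[OF vc] E by blast
    moreover have "v \<noteq> 0\<^sub>v nn"
    proof
      assume "v = 0\<^sub>v nn"
      then have "v $ idx h (0, 1) = 0" using idx_mem[OF hm(2)] by simp
      then show False using vw[OF hm(2)] VS01 by simp
    qed
    ultimately show "eigenvalue (M_mat h lG lL g) r"
      unfolding eigenvalue_def eigenvector_def dimM M using vc B(4) by auto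
  qed
qed

end

lemma Vf_cont: "isCont (\<lambda>z. Vf z lL g s n) x"
proof (induction s arbitrary: n)
  case 0 then show ?case by simp
next
  case (Suc s)
  note IHs = Suc.IH
  show ?case
  proof (induction n)
    case 0 then show ?case by simp
  next
    case (Suc m)
    have a: "isCont (\<lambda>z. Vf z lL g s (Suc (Suc m))) x" by (rule IHs)
    have b: "isCont (\<lambda>z. Vf z lL g (Suc s) m) x" by (rule Suc.IH)
    show ?case unfolding Vf.simps
      by (intro continuous_intros a b) simp
  qed
qed

lemma Vf_nonneg:
  assumes "z \<ge> 0" "lL > 0" "g > 0"
  shows "Vf z lL g s n \<ge> 0"
proof (induction s arbitrary: n)
  case 0 then show ?case by simp
next
  case (Suc s)
  note IHs = Suc.IH
  show ?case
  proof (induction n)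
    case 0 then show ?case by simp
  next
    case (Suc m)
    have a: "Vf z lL g s (Suc (Suc m)) \<ge> 0" by (rule IHs)
    have b: "Vf z lL g (Suc s) m \<ge> 0" by (rule Suc.IH)
    have q1: "0 < (1 + real k) * lL + g" for k
    proof -
      have "0 < 1 + real k" by simp
      then show ?thesis using assms by (intro add_pos_pos[OF mult_pos_pos]) auto
    qed
    have q2: "0 < (1 + real j) * ((1 + real k) * lL + g)" for j k
      using q1 by (intro mult_pos_pos) auto
    show ?case unfolding Vf.simps using a b assms
      by (intro add_nonneg_nonneg mult_nonneg_nonneg divide_nonneg_pos) (auto simp: q1 q2)
  qed
qed

lemma Vf_lower:
  assumes "z \<ge> 0" "lL > 0" "g > 0" "s \<ge> 1" "n \<ge> 1"
  shows "Vf z lL g s n \<ge> g / (real n * (real s * lL + g))"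
proof -
  have q: "real s * lL + g > 0" using assms by (simp add: add_nonneg_pos)
  have "0 \<le> real s * lL / (real s * lL + g) * (1 + z / real n) * Vf z lL g (s - 1) (n + 1)"
    using assms q Vf_nonneg[OF assms(1-3)] by (intro mult_nonneg_nonneg divide_nonneg_pos) auto
  moreover have "0 \<le> (real n - 1) * g / (real n * (real s * lL + g)) * Vf z lL g s (n - 1)"
    using assms q Vf_nonneg[OF assms(1-3)] by (intro mult_nonneg_nonneg divide_nonneg_pos) auto
  moreover have "Vf z lL g s n = g / (real n * (real s * lL + g))
     + real s * lL / (real s * lL + g) * (1 + z / real n) * Vf z lL g (s - 1) (n + 1)
     + (real n - 1) * g / (real n * (real s * lL + g)) * Vf z lL g s (n - 1)"
    using assms by (intro Vf_rec) auto
  ultimately show ?thesis by linarith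
qed


lemma exists_root:
  assumes h2: "h \<ge> 2" and lGp: "lG > 0" and lLp: "lL > 0" and gp: "g > 0"
  shows "\<exists>z>0. z * (lG / g) * Vf z lL g (h - 1) 1 = 1"
proof -
  define F where "F z = z * (lG / g) * Vf z lL g (h - 1) 1" for z
  define c0 where "c0 = g / (real 1 * (real (h - 1) * lL + g))"
  have qp: "real (h - 1) * lL + g > 0" using lLp gp by (simp add: add_nonneg_pos)
  have c0p: "c0 > 0" unfolding c0_def using gp qp by simp
  define z1 where "z1 = g / (lG * c0)"
  have z1p: "z1 > 0" unfolding z1_def using gp lGp c0p by simp
  have low: "Vf z1 lL g (h - 1) 1 \<ge> c0" unfolding c0_def
    using Vf_lower[of z1 lL g "h - 1" 1] z1p lLp gp h2 by simp
  have "F z1 \<ge> z1 * (lG / g) * c0" unfolding F_def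
    using low z1p lGp gp by (intro mult_left_mono) auto
  moreover have "z1 * (lG / g) * c0 = 1" unfolding z1_def using gp lGp c0p by (simp add: field_simps)
  ultimately have F1: "1 \<le> F z1" by linarith
  have F0: "F 0 \<le> 1" unfolding F_def by simp
  have cont: "\<forall>x. 0 \<le> x \<and> x \<le> z1 \<longrightarrow> isCont F x"
    unfolding F_def by (intro allI impI continuous_intros Vf_cont)
  obtain z where z: "0 \<le> z" "z \<le> z1" "F z = 1" using IVT[of F 0 1 z1, OF F0 F1 _ cont] z1p by auto
  have "z \<noteq> 0" using z(3) unfolding F_def by auto
  then have "z > 0" using z(1) by simp
  then show ?thesis using z(3) unfolding F_def by blast
qed

lemma finite_eig:
  assumes "(A :: real mat) \<in> carrier_mat n n"
  shows "finite {r. eigenvalue A r}"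
proof -
  have "char_poly A \<noteq> 0" using degree_monic_char_poly[OF assms] by auto
  then have "finite {r. poly (char_poly A) r = 0}" by (rule poly_roots_finite)
  then show ?thesis using eigenvalue_root_char_poly[OF assms] by simp
qed

theorem mainTheorem3:
  fixes h :: nat and lG lL g :: real
  assumes "h \<ge> 2" and "lG > 0" and "lL > 0" and "g > 0"
  shows "max_eigenvalue (M_mat h lG lL g) = max_eigenvalue (A_mat h lG lL g)"
proof -
  note a = assms
  define SM where "SM = {r. eigenvalue (M_mat h lG lL g) r}"
  define SA where "SA = {r. eigenvalue (A_mat h lG lL g) r}"
  have pos: "r \<in> SM \<longleftrightarrow> r \<in> SA" if "r > 0" for r
    unfolding SM_def SA_def mem_Collect_eq
    using M_eig_iff[OF a that] A_eig[OF that, of h lG lL g] Wf0_Vf[of h lL g lG "1 / r"] a by simp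
  obtain B where B: "mat_inverse (1\<^sub>m (length (hh_states h)) - P_mat h lL g) = Some B"
    "B \<in> carrier_mat (length (hh_states h)) (length (hh_states h))"
    using Binv[OF a] by metis
  have Mc: "M_mat h lG lL g \<in> carrier_mat (length (hh_states h)) (length (hh_states h))"
    unfolding M_mat_def Let_def B(1) using B(2) Fm_carrier[OF a] by simp
  have Ac: "A_mat h lG lL g \<in> carrier_mat h h" unfolding A_mat_def by simp
  have fM: "finite SM" unfolding SM_def by (rule finite_eig[OF Mc])
  have fA: "finite SA" unfolding SA_def by (rule finite_eig[OF Ac])
  obtain z where z: "z > 0" "z * (lG / g) * Vf z lL g (h - 1) 1 = 1" using exists_root[OF a] by blast
  define r0 where "r0 = 1 / z"
  have r0p: "r0 > 0" unfolding r0_def using z by simp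
  have "r0 \<in> SM" unfolding SM_def mem_Collect_eq M_eig_iff[OF a r0p] unfolding r0_def using z by simp
  then have inM: "r0 \<in> SM" "r0 \<in> SA" using pos[OF r0p] by auto
  have m1: "Max SM \<le> Max SA"
  proof -
    have "Max SM \<in> SM" using fM inM by (intro Max_in) auto
    moreover have "Max SM \<ge> r0" using fM inM by simp
    ultimately have "Max SM \<in> SA" using pos r0p by auto
    then show ?thesis using fA by simp
  qed
  have m2: "Max SA \<le> Max SM"
  proof -
    have "Max SA \<in> SA" using fA inM by (intro Max_in) auto
    moreover have "Max SA \<ge> r0" using fA inM by simp
    ultimately have "Max SA \<in> SM" using pos r0p by auto
    then show ?thesis using fM by simp
  qed
  show ?thesis unfolding max_eigenvalue_def SM_def[symmetric] SA_def[symmetric] using m1 m2 by simp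
qed

end
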